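(* Fix $n\ge1$ and order the compositions of $n$ first by increasing length and then, among compositions of equal length, lexicographically. For each composition $J$ of $n$ let $$U_J=\sum_{\sigma\in\mathfrak S_n,\ \mathrm{SC}(\sigma)=\overline{J}^{\sim}}F_{\mathrm{RC}(\sigma)}\in QSym.$$ Then the transition matrix $M_n$, whose column indexed by $J$ gives the coefficients of $U_J$ in the fundamental basis $(F_I)$, is upper unitriangular: $U_J=F_J+\sum_{I<J}m_{I,J}F_I$ for some integers $m_{I,J}$.
   Context: Permutations are words $\sigma_1\cdots\sigma_n$. A word $a_1\cdots a_m$ is initially dominated if $a_1>a_j$ for all $j\ge2$; every permutation factors uniquely as $\sigma=u_1\cdots u_r$ into initially dominated words with increasing first letters, and $\mathrm{SC}(\sigma)=(|u_1|,\ldots,|u_r|)$ is its saillance composition. For a composition $I=(i_1,\ldots,i_r)$ of $n$, $\mathrm{Des}(I)=\{i_1,i_1+i_2,\ldots,i_1+\cdots+i_{r-1}\}$, and $\overline{I}^{\sim}$ denotes the composition of $n$ whose descent set is $\{1,\ldots,n-1\}\setminus\mathrm{Des}(I)$. The recoil composition $\mathrm{RC}(\sigma)$ is the composition of $n$ whose descent set is the set of recoils $\{i: i+1 \text{ appears to the left of } i \text{ in } \sigma\}$. $F_I$ denotes Gessel's fundamental quasi-symmetric function. *)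

theory Defs
  imports Main
begin

definition is_comp :: "nat \<Rightarrow> nat list \<Rightarrow> bool" where
  "is_comp n I \<longleftrightarrow> (\<forall>x\<in>set I. 0 < x) \<and> sum_list I = n"

definition comp_des :: "nat list \<Rightarrow> nat set" where
  "comp_des I = {sum_list (take k I) | k. 0 < k \<and> k < length I}"

definition comp_of_des :: "nat \<Rightarrow> nat set \<Rightarrow> nat list" where
  "comp_of_des n S = (THE K. is_comp n K \<and> comp_des K = S)"

definition comp_bar_tilde :: "nat \<Rightarrow> nat list \<Rightarrow> nat list" where
  "comp_bar_tilde n J = comp_of_des n ({1..<n} - comp_des J)"

definition perms :: "nat \<Rightarrow> nat list set" where
  "perms n = {s. distinct s \<and> set s = {1..n}}"

definition init_dominated :: "nat list \<Rightarrow> bool" where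
  "init_dominated u \<longleftrightarrow> u \<noteq> [] \<and> (\<forall>a\<in>set (tl u). a < hd u)"

definition saillance_factorization :: "nat list \<Rightarrow> nat list list" where
  "saillance_factorization s = (THE us. concat us = s \<and> (\<forall>u\<in>set us. init_dominated u)
      \<and> sorted_wrt (<) (map hd us))"

definition SC :: "nat list \<Rightarrow> nat list" where
  "SC s = map length (saillance_factorization s)"

definition recoils :: "nat list \<Rightarrow> nat set" where
  "recoils s = {i. \<exists>j k. j < k \<and> k < length s \<and> s ! j = i + 1 \<and> s ! k = i}"

definition RC :: "nat \<Rightarrow> nat list \<Rightarrow> nat list" where
  "RC n s = comp_of_des n (recoils s)"

text \<open>Element of QSym represented by its coefficient vector in the fundamental
  basis (F_I): U_J = sum over sigma with SC sigma = J-bar-tilde of F_(RC sigma),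
  so the coefficient of F_I is the number of such sigma with RC sigma = I.\<close>
definition U_coeff :: "nat \<Rightarrow> nat list \<Rightarrow> nat list \<Rightarrow> int" where
  "U_coeff n J I = int (card {s \<in> perms n. SC s = comp_bar_tilde n J \<and> RC n s = I})"

definition comp_less :: "nat list \<Rightarrow> nat list \<Rightarrow> bool" where
  "comp_less I J \<longleftrightarrow> length I < length J \<or>
     (length I = length J \<and> (I, J) \<in> lexord {(a, b). a < b})"

end

theory Submission
  imports Defs
begin


lemma comp_des_Nil[simp]: "comp_des [] = {}"
  by (simp add: comp_des_def)

lemma comp_des_Cons:
  "comp_des (a # A) = (if A = [] then {} else insert a ((\<lambda>x. a + x) ` comp_des A))"
proof (cases "A = []")
  case True then show ?thesis by (simp add: comp_des_def)
next
  case False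
  have "comp_des (a # A) = {sum_list (take k (a#A)) | k. 0 < k \<and> k < Suc (length A)}"
    by (simp add: comp_des_def)
  also have "\<dots> = insert a ((\<lambda>x. a + x) ` comp_des A)"
  proof (rule set_eqI, rule iffI)
    fix y assume "y \<in> {sum_list (take k (a#A)) | k. 0 < k \<and> k < Suc (length A)}"
    then obtain k where k: "0 < k" "k < Suc (length A)" "y = sum_list (take k (a#A))" by blast
    then obtain k' where "k = Suc k'" by (cases k) auto
    with k show "y \<in> insert a ((\<lambda>x. a + x) ` comp_des A)"
      by (cases k') (auto simp: comp_des_def)
  next
    fix y assume "y \<in> insert a ((\<lambda>x. a + x) ` comp_des A)"
    then consider "y = a" | k where "0 < k" "k < length A" "y = a + sum_list (take k A)"
      by (auto simp: comp_des_def)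
    then show "y \<in> {sum_list (take k (a#A)) | k. 0 < k \<and> k < Suc (length A)}"
    proof cases
      case 1 then show ?thesis using False
        by (auto intro!: exI[of _ 1])
    next
      case 2 then show ?thesis
        by (auto intro!: exI[of _ "Suc k"])
    qed
  qed
  finally show ?thesis using False by simp
qed

lemma comp_des_ge: "y \<in> comp_des (a # A) \<Longrightarrow> a \<le> y"
  by (auto simp: comp_des_Cons split: if_splits)

lemma comp_des_pos: "\<forall>x\<in>set I. 0 < x \<Longrightarrow> y \<in> comp_des I \<Longrightarrow> 0 < y"
  by (cases I) (auto simp: comp_des_Cons split: if_splits)

lemma comp_des_sub: "is_comp n I \<Longrightarrow> comp_des I \<subseteq> {1..<n}"
proof (induction I arbitrary: n)
  case Nil then show ?case by simp
next
  case (Cons a A)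
  then have A: "is_comp (n - a) A" "0 < a" "a + sum_list A = n" by (auto simp: is_comp_def)
  show ?case
  proof (cases "A = []")
    case True then show ?thesis by (simp add: comp_des_Cons)
  next
    case False
    then have "sum_list A > 0" using A(1) unfolding is_comp_def
      by (cases A) auto
    with Cons.IH[OF A(1)] A show ?thesis using False
      by (auto simp: comp_des_Cons)
  qed
qed

lemma card_comp_des: "\<forall>x\<in>set I. 0 < x \<Longrightarrow> card (comp_des I) = length I - 1"
proof (induction I)
  case Nil then show ?case by simp
next
  case (Cons a A)
  show ?case
  proof (cases "A = []")
    case True then show ?thesis by (simp add: comp_des_Cons)
  next
    case False
    have fin: "finite (comp_des A)" by (simp add: comp_des_def)
    have posA: "\<forall>x\<in>set A. 0 < x" using Cons.prems by simp
    have "a \<notin> (\<lambda>x. a + x) ` comp_des A"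
    proof
      assume "a \<in> (\<lambda>x. a + x) ` comp_des A"
      then obtain y where "y \<in> comp_des A" "a = a + y" by blast
      then show False using comp_des_pos[OF posA] by fastforce
    qed
    moreover have "inj_on (\<lambda>x. a + x) (comp_des A)" by (simp add: inj_on_def)
    ultimately show ?thesis using False Cons fin
      by (simp add: comp_des_Cons card_image)
  qed
qed

lemma comp_unique:
  "is_comp n K \<Longrightarrow> is_comp n K' \<Longrightarrow> comp_des K = comp_des K' \<Longrightarrow> K = K'"
proof (induction K arbitrary: n K')
  case Nil
  then have "n = 0" by (simp add: is_comp_def)
  with Nil show ?case by (cases K') (auto simp: is_comp_def)
next
  case (Cons a A)
  then have "n > 0" by (auto simp: is_comp_def)
  then obtain b B where K': "K' = b # B" using Cons.prems by (cases K') (auto simp: is_comp_def)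
  have pa: "\<forall>x\<in>set A. 0 < x" "0 < a" using Cons.prems by (auto simp: is_comp_def)
  have pb: "\<forall>x\<in>set B. 0 < x" "0 < b" using Cons.prems K' by (auto simp: is_comp_def)
  show ?case
  proof (cases "A = []")
    case True
    then have "B = []" using Cons.prems K' by (auto simp: comp_des_Cons split: if_splits)
    then show ?thesis using True Cons.prems K' by (auto simp: is_comp_def)
  next
    case False
    then have "B \<noteq> []" using Cons.prems K' by (auto simp: comp_des_Cons split: if_splits)
    have "a \<in> comp_des (a # A)" using False by (simp add: comp_des_Cons)
    then have "a \<in> comp_des K'" using Cons.prems(3) by simp
    then have "b \<le> a" using K' comp_des_ge by blast
    moreover have "b \<in> comp_des (a # A)" using Cons.prems K' \<open>B \<noteq> []\<close> by (simp add: comp_des_Cons)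
    then have "a \<le> b" using comp_des_ge by blast
    ultimately have ab: "a = b" by simp
    have na: "a \<notin> (\<lambda>x. a + x) ` comp_des A" using comp_des_pos[OF pa(1)] by (metis add_0_right image_iff less_irrefl add_left_imp_eq)
    have nb: "a \<notin> (\<lambda>x. a + x) ` comp_des B" using comp_des_pos[OF pb(1)] by (metis add_0_right image_iff less_irrefl add_left_imp_eq)
    have "insert a ((\<lambda>x. a + x) ` comp_des A) = insert a ((\<lambda>x. a + x) ` comp_des B)"
      using Cons.prems K' False \<open>B \<noteq> []\<close> ab by (simp add: comp_des_Cons)
    then have "(\<lambda>x. a + x) ` comp_des A = (\<lambda>x. a + x) ` comp_des B"
      using na nb by (metis insert_ident)
    then have "comp_des A = comp_des B"
      by (metis (no_types, lifting) add_left_imp_eq inj_onI inj_image_eq_iff)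
    moreover have "is_comp (n - a) A" "is_comp (n - a) B"
      using Cons.prems K' ab by (auto simp: is_comp_def)
    ultimately have "A = B" using Cons.IH by blast
    then show ?thesis using K' ab by simp
  qed
qed

lemma comp_exists:
  "1 \<le> n \<Longrightarrow> S \<subseteq> {1..<n} \<Longrightarrow> \<exists>K. is_comp n K \<and> comp_des K = S"
proof (induction n arbitrary: S rule: less_induct)
  case (less n)
  show ?case
  proof (cases "S = {}")
    case True then show ?thesis using less.prems
      by (intro exI[of _ "[n]"]) (auto simp: is_comp_def comp_des_Cons)
  next
    case False
    have fin: "finite S" using less.prems finite_subset by blast
    define a where "a = Min S"
    have aS: "a \<in> S" using Min_in[OF fin False] a_def by simp
    have amin: "\<forall>x\<in>S. a \<le> x" using Min_le[OF fin] a_def by simp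
    have a: "1 \<le> a" "a < n" using aS less.prems by auto
    define S' where "S' = (\<lambda>x. x - a) ` (S - {a})"
    have "S' \<subseteq> {1..<n - a}" unfolding S'_def
    proof (rule image_subsetI)
      fix x assume "x \<in> S - {a}"
      then have "a < x" "x < n" using amin less.prems by force+
      then show "x - a \<in> {1..<n - a}" by auto
    qed
    moreover have "n - a < n" "1 \<le> n - a" using a by auto
    ultimately obtain K' where K': "is_comp (n - a) K'" "comp_des K' = S'"
      using less.IH by blast
    have "K' \<noteq> []" using K' a by (auto simp: is_comp_def)
    have "insert a ((\<lambda>x. a + x) ` S') = S"
    proof
      show "insert a ((\<lambda>x. a + x) ` S') \<subseteq> S" using aS amin by (auto simp: S'_def)
    next
      show "S \<subseteq> insert a ((\<lambda>x. a + x) ` S')"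
      proof
        fix x assume "x \<in> S"
        then show "x \<in> insert a ((\<lambda>x. a + x) ` S')"
          using amin by (cases "x = a") (auto simp: S'_def image_iff intro!: bexI[of _ x])
      qed
    qed
    then have "comp_des (a # K') = S" using K' \<open>K' \<noteq> []\<close> by (simp add: comp_des_Cons)
    moreover have "is_comp n (a # K')" using K' a by (auto simp: is_comp_def)
    ultimately show ?thesis by blast
  qed
qed

lemma comp_of_des:
  assumes "1 \<le> n" "S \<subseteq> {1..<n}"
  shows "is_comp n (comp_of_des n S) \<and> comp_des (comp_of_des n S) = S"
proof -
  have "\<exists>!K. is_comp n K \<and> comp_des K = S"
    using comp_exists[OF assms] comp_unique by blast
  then show ?thesis unfolding comp_of_des_def by (rule theI')
qed

lemma lex_from_des:
  assumes "length I = length J" "\<forall>x\<in>set I. 0 < x" "\<forall>x\<in>set J. 0 < x"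
    "x \<in> comp_des I" "x \<notin> comp_des J" "\<forall>y<x. y \<in> comp_des I \<longleftrightarrow> y \<in> comp_des J"
  shows "(I, J) \<in> lexord {(a, b). a < b}"
  using assms
proof (induction I arbitrary: J x)
  case Nil then show ?case by simp
next
  case (Cons a A)
  then obtain b B where J: "J = b # B" by (cases J) auto
  have "A \<noteq> []" using Cons.prems by (auto simp: comp_des_Cons split: if_splits)
  then have "B \<noteq> []" using Cons.prems J by auto
  consider "a < b" | "a = b" | "b < a" by linarith
  then show ?case
  proof cases
    case 1 then show ?thesis using J by simp
  next
    case 3
    have "b \<in> comp_des J" using J \<open>B \<noteq> []\<close> by (simp add: comp_des_Cons)
    moreover have "b \<notin> comp_des (a # A)" using comp_des_ge 3 by fastforce
    moreover have "a \<le> x" using Cons.prems(4) comp_des_ge by blast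
    ultimately show ?thesis using Cons.prems 3
      by (metis linorder_neqE_nat order.strict_trans2)
  next
    case 2
    have xa: "x \<noteq> a" using Cons.prems J 2 \<open>B \<noteq> []\<close> by (auto simp: comp_des_Cons)
    then obtain x' where x': "x = a + x'" "x' \<in> comp_des A"
      using Cons.prems \<open>A \<noteq> []\<close> by (auto simp: comp_des_Cons)
    have "x' \<notin> comp_des B" using Cons.prems J 2 x' \<open>B \<noteq> []\<close> by (auto simp: comp_des_Cons)
    moreover have "\<forall>y<x'. y \<in> comp_des A \<longleftrightarrow> y \<in> comp_des B"
    proof (intro allI impI)
      fix y assume "y < x'"
      then have "a + y < x" using x' by simp
      then have e: "a + y \<in> comp_des (a # A) \<longleftrightarrow> a + y \<in> comp_des J" using Cons.prems by blast
      show "y \<in> comp_des A \<longleftrightarrow> y \<in> comp_des B"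
      proof (cases "y = 0")
        case True
        then show ?thesis using comp_des_pos[of A] comp_des_pos[of B] Cons.prems J by auto
      next
        case False
        then show ?thesis using e J 2 \<open>A \<noteq> []\<close> \<open>B \<noteq> []\<close> by (auto simp: comp_des_Cons)
      qed
    qed
    ultimately have "(A, B) \<in> lexord {(a, b). a < b}"
      using Cons.IH[of B x'] Cons.prems J x' by auto
    then show ?thesis using J 2 by simp
  qed
qed



function fct :: "nat list \<Rightarrow> nat list list" where
  "fct [] = []"
| "fct (a # xs) = (a # takeWhile (\<lambda>x. x < a) xs) # fct (dropWhile (\<lambda>x. x < a) xs)"
  by pat_completeness auto
termination
  by (relation "measure length") (auto simp: le_imp_less_Suc length_dropWhile_le)

lemma fct_concat: "concat (fct s) = s"
  by (induction s rule: fct.induct) auto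

lemma fct_dom: "\<forall>u\<in>set (fct s). init_dominated u"
  by (induction s rule: fct.induct) (auto simp: init_dominated_def dest: set_takeWhileD)

lemma fct_Nil_iff: "fct s = [] \<longleftrightarrow> s = []"
  by (cases s) auto

lemma fct_hd: "\<forall>u\<in>set (fct s). hd s \<le> hd u"
proof (induction s rule: fct.induct)
  case 1 then show ?case by simp
next
  case (2 a xs)
  define dw where "dw = dropWhile (\<lambda>x. x < a) xs"
  have IH: "\<forall>u\<in>set (fct dw). hd dw \<le> hd u" using 2 by (simp add: dw_def)
  show ?case
  proof
    fix u assume "u \<in> set (fct (a # xs))"
    then consider "u = a # takeWhile (\<lambda>x. x < a) xs" | "u \<in> set (fct dw)"
      by (auto simp: dw_def)
    then show "hd (a # xs) \<le> hd u"
    proof cases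
      case 1 then show ?thesis by simp
    next
      case 2
      then have "dw \<noteq> []" by auto
      then have "a \<le> hd dw" using hd_dropWhile[of "\<lambda>x. x < a" xs] by (simp add: dw_def)
      then show ?thesis using IH 2 by force
    qed
  qed
qed

lemma fct_sorted: "distinct s \<Longrightarrow> sorted_wrt (<) (map hd (fct s))"
proof (induction s rule: fct.induct)
  case 1 then show ?case by simp
next
  case (2 a xs)
  define dw where "dw = dropWhile (\<lambda>x. x < a) xs"
  have d: "distinct dw" using 2 by (simp add: dw_def distinct_dropWhile)
  have "\<forall>u\<in>set (fct dw). a < hd u"
  proof (cases "dw = []")
    case True then show ?thesis by simp
  next
    case False
    then have "a \<le> hd dw" using hd_dropWhile[of "\<lambda>x. x < a" xs] by (simp add: dw_def)
    moreover have "hd dw \<in> set xs" using False unfolding dw_def by (metis hd_in_set set_dropWhileD)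
    then have "hd dw \<noteq> a" using 2 by auto
    ultimately show ?thesis using fct_hd[of dw] by force
  qed
  then show ?case using 2 d by (simp add: dw_def)
qed

lemma tw_nil: "\<forall>x\<in>set (take 1 c). \<not> P x \<Longrightarrow> takeWhile P c = [] \<and> dropWhile P c = c"
  by (cases c) auto

lemma fct_unique:
  "concat us = s \<Longrightarrow> \<forall>u\<in>set us. init_dominated u \<Longrightarrow> sorted_wrt (<) (map hd us) \<Longrightarrow> us = fct s"
proof (induction us arbitrary: s)
  case Nil then show ?case by simp
next
  case (Cons u us)
  obtain a t where u: "u = a # t" using Cons.prems by (cases u) (auto simp: init_dominated_def)
  have t: "\<forall>x\<in>set t. x < a" using Cons.prems u by (auto simp: init_dominated_def)
  have c: "\<forall>x\<in>set (take 1 (concat us)). \<not> x < a"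
  proof (cases us)
    case Nil then show ?thesis by simp
  next
    case (Cons v vs)
    then have "v \<noteq> []" using Cons.prems by (auto simp: init_dominated_def)
    then show ?thesis using Cons.prems u Cons by (cases v) auto
  qed
  have c2: "takeWhile (\<lambda>x. x < a) (concat us) = [] \<and> dropWhile (\<lambda>x. x < a) (concat us) = concat us"
    using tw_nil[OF c] .
  have tw: "takeWhile (\<lambda>x. x < a) (t @ concat us) = t"
    using t c2 by (simp add: takeWhile_append2)
  have dw: "dropWhile (\<lambda>x. x < a) (t @ concat us) = concat us"
    using t c2 by (simp add: dropWhile_append2)
  have "us = fct (concat us)" using Cons by auto
  then show ?case using Cons.prems u tw dw by auto
qed

lemma saillance_fct: "distinct s \<Longrightarrow> saillance_factorization s = fct s"
  unfolding saillance_factorization_def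
  by (rule the_equality) (auto simp: fct_concat fct_dom fct_sorted intro: fct_unique)

definition lrpos :: "nat list \<Rightarrow> nat set" where
  "lrpos s = {q. q < length s \<and> (\<forall>i<q. s ! i < s ! q)}"

lemma lrpos_append:
  "lrpos (xs @ ys) = lrpos xs \<union> (\<lambda>q. length xs + q) ` {q \<in> lrpos ys. \<forall>x\<in>set xs. x < ys ! q}"
proof (rule set_eqI, rule iffI)
  fix q assume q: "q \<in> lrpos (xs @ ys)"
  show "q \<in> lrpos xs \<union> (\<lambda>q. length xs + q) ` {q \<in> lrpos ys. \<forall>x\<in>set xs. x < ys ! q}"
  proof (cases "q < length xs")
    case True
    then show ?thesis using q by (auto simp: lrpos_def nth_append)
  next
    case False
    define q' where "q' = q - length xs"
    have qq: "q = length xs + q'" using False q'_def by simp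
    have "q' \<in> lrpos ys"
      unfolding lrpos_def
    proof (intro CollectI conjI allI impI)
      show "q' < length ys" using q qq by (simp add: lrpos_def)
      fix i assume "i < q'"
      then have "length xs + i < q" using qq by simp
      then have "(xs @ ys) ! (length xs + i) < (xs @ ys) ! q" using q unfolding lrpos_def by blast
      then show "ys ! i < ys ! q'" using qq by (simp add: nth_append)
    qed
    moreover have "\<forall>x\<in>set xs. x < ys ! q'"
    proof
      fix x assume "x \<in> set xs"
      then obtain i where "i < length xs" "x = xs ! i" by (auto simp: in_set_conv_nth)
      then have "i < q" using qq by simp
      then have "(xs @ ys) ! i < (xs @ ys) ! q" using q unfolding lrpos_def by blast
      then show "x < ys ! q'" using qq \<open>i < length xs\<close> \<open>x = xs ! i\<close> by (simp add: nth_append)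
    qed
    ultimately show ?thesis using qq by blast
  qed
next
  fix q assume "q \<in> lrpos xs \<union> (\<lambda>q. length xs + q) ` {q \<in> lrpos ys. \<forall>x\<in>set xs. x < ys ! q}"
  then consider "q \<in> lrpos xs" | q' where "q = length xs + q'" "q' \<in> lrpos ys" "\<forall>x\<in>set xs. x < ys ! q'"
    by blast
  then show "q \<in> lrpos (xs @ ys)"
  proof cases
    case 1 then show ?thesis by (auto simp: lrpos_def nth_append)
  next
    case 2
    show ?thesis unfolding lrpos_def
    proof (intro CollectI conjI allI impI)
      show "q < length (xs @ ys)" using 2 by (simp add: lrpos_def)
      fix i assume i: "i < q"
      show "(xs @ ys) ! i < (xs @ ys) ! q"
      proof (cases "i < length xs")
        case True then show ?thesis using 2 by (simp add: nth_append)
      next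
        case False then show ?thesis using 2 i by (auto simp: nth_append lrpos_def)
      qed
    qed
  qed
qed

lemma lrpos_head: "\<forall>x\<in>set t. x < a \<Longrightarrow> lrpos (a # t) = {0}"
  unfolding lrpos_def
proof (rule set_eqI, rule iffI)
  fix q assume asm: "\<forall>x\<in>set t. x < a" "q \<in> {q. q < length (a # t) \<and> (\<forall>i<q. (a # t) ! i < (a # t) ! q)}"
  show "q \<in> {0}"
  proof (rule ccontr)
    assume "q \<notin> {0}"
    then obtain p where p: "q = Suc p" by (cases q) auto
    have "(a # t) ! 0 < (a # t) ! q" "p < length t" using asm p by auto
    then have "a < t ! p" "t ! p < a" using p asm(1) nth_mem by auto
    then show False by simp
  qed
qed auto

lemma lrpos_ge_hd: "q \<in> lrpos s \<Longrightarrow> s ! 0 \<le> s ! q"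
  by (cases q) (auto simp: lrpos_def)

lemma fct_des: "distinct s \<Longrightarrow> comp_des (map length (fct s)) = lrpos s - {0}"
proof (induction s rule: fct.induct)
  case 1 then show ?case by (simp add: lrpos_def)
next
  case (2 a xs)
  define tw where "tw = takeWhile (\<lambda>x. x < a) xs"
  define dw where "dw = dropWhile (\<lambda>x. x < a) xs"
  have xs: "xs = tw @ dw" by (simp add: tw_def dw_def)
  have twa: "\<forall>x\<in>set tw. x < a" by (auto simp: tw_def dest: set_takeWhileD)
  have d: "distinct dw" using 2 by (simp add: dw_def distinct_dropWhile)
  have IH: "comp_des (map length (fct dw)) = lrpos dw - {0}" using 2 d by (simp add: dw_def)
  have big: "\<forall>q\<in>lrpos dw. \<forall>x\<in>set (a # tw). x < dw ! q"
  proof (intro ballI)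
    fix q x assume q: "q \<in> lrpos dw" and x: "x \<in> set (a # tw)"
    then have ne: "dw \<noteq> []" by (auto simp: lrpos_def)
    then have "a \<le> hd dw" using hd_dropWhile[of "\<lambda>x. x < a" xs] by (simp add: dw_def)
    moreover have "hd dw \<in> set xs" using ne unfolding dw_def by (metis hd_in_set set_dropWhileD)
    then have "hd dw \<noteq> a" using 2 by auto
    moreover have "hd dw \<le> dw ! q" using lrpos_ge_hd[OF q] ne by (simp add: hd_conv_nth)
    ultimately show "x < dw ! q" using x twa by fastforce
  qed
  have "lrpos (a # xs) = lrpos ((a # tw) @ dw)" using xs by simp
  also have "\<dots> = {0} \<union> (\<lambda>q. Suc (length tw) + q) ` lrpos dw"
    unfolding lrpos_append lrpos_head[OF twa] using big by auto
  finally have L: "lrpos (a # xs) - {0} = (\<lambda>q. Suc (length tw) + q) ` lrpos dw" by auto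
  have F: "map length (fct (a # xs)) = Suc (length tw) # map length (fct dw)"
    by (simp add: tw_def dw_def)
  have E: "lrpos [] = {}" by (simp add: lrpos_def)
  show ?case
  proof (cases "dw = []")
    case True then show ?thesis using L F E by (simp add: comp_des_Cons)
  next
    case False
    then have "0 \<in> lrpos dw" by (simp add: lrpos_def)
    then have "lrpos dw = insert 0 (lrpos dw - {0})" by auto
    then have "(\<lambda>q. Suc (length tw) + q) ` lrpos dw
       = insert (Suc (length tw)) ((\<lambda>q. Suc (length tw) + q) ` (lrpos dw - {0}))"
      by (metis add_0_right image_insert)
    then show ?thesis using L False IH fct_Nil_iff[of dw] F
      by (simp add: comp_des_Cons)
  qed
qed



lemma recoils_append:
  "recoils (xs @ ys) = recoils xs \<union> recoils ys \<union> {i. Suc i \<in> set xs \<and> i \<in> set ys}"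
proof (rule set_eqI, rule iffI)
  fix i assume "i \<in> recoils (xs @ ys)"
  then obtain j k where jk: "j < k" "k < length (xs @ ys)" "(xs @ ys) ! j = i + 1" "(xs @ ys) ! k = i"
    by (auto simp: recoils_def)
  show "i \<in> recoils xs \<union> recoils ys \<union> {i. Suc i \<in> set xs \<and> i \<in> set ys}"
  proof (cases "k < length xs")
    case True
    then have "i \<in> recoils xs" using jk unfolding recoils_def
      by (intro CollectI exI[of _ j] exI[of _ k]) (auto simp: nth_append)
    then show ?thesis by blast
  next
    case False
    show ?thesis
    proof (cases "j < length xs")
      case True
      have "xs ! j = Suc i" using jk True by (simp add: nth_append)
      then have 1: "Suc i \<in> set xs" using True by (metis nth_mem)
      have "ys ! (k - length xs) = i" "k - length xs < length ys" using jk False by (simp_all add: nth_append)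
      then have "i \<in> set ys" by (metis nth_mem)
      with 1 have "Suc i \<in> set xs" "i \<in> set ys" by auto
      then show ?thesis by blast
    next
      case F2: False
      then have "i \<in> recoils ys" using jk False unfolding recoils_def
        by (intro CollectI exI[of _ "j - length xs"] exI[of _ "k - length xs"]) (auto simp: nth_append)
      then show ?thesis by blast
    qed
  qed
next
  fix i assume "i \<in> recoils xs \<union> recoils ys \<union> {i. Suc i \<in> set xs \<and> i \<in> set ys}"
  then consider "i \<in> recoils xs" | "i \<in> recoils ys" | "Suc i \<in> set xs" "i \<in> set ys" by blast
  then show "i \<in> recoils (xs @ ys)"
  proof cases
    case 1
    then obtain j k where jk: "j < k" "k < length xs" "xs ! j = i + 1" "xs ! k = i"
      by (auto simp: recoils_def)
    then show ?thesis unfolding recoils_def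
      by (intro CollectI exI[of _ j] exI[of _ k]) (auto simp: nth_append)
  next
    case 2
    then obtain j k where jk: "j < k" "k < length ys" "ys ! j = i + 1" "ys ! k = i"
      by (auto simp: recoils_def)
    then show ?thesis unfolding recoils_def
      by (intro CollectI exI[of _ "length xs + j"] exI[of _ "length xs + k"]) (auto simp: nth_append)
  next
    case 3
    then obtain j k where "j < length xs" "xs ! j = Suc i" "k < length ys" "ys ! k = i"
      by (auto simp: in_set_conv_nth)
    then show ?thesis unfolding recoils_def
      by (intro CollectI exI[of _ j] exI[of _ "length xs + k"]) (auto simp: nth_append)
  qed
qed

lemma recoils_sub_set: "recoils xs \<subseteq> set xs"
  by (auto simp: recoils_def)

lemma recoils_single[simp]: "recoils [x] = {}"
  by (auto simp: recoils_def)

lemma recoils_Cons: "recoils (x # xs) = recoils xs \<union> {i. Suc i = x \<and> i \<in> set xs}"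
  using recoils_append[of "[x]" xs] by simp

lemma recoils_rev_interval: "recoils (rev [Suc a..<Suc b]) = {i. a < i \<and> i < b}"
proof (induction b)
  case 0 then show ?case by (simp add: recoils_def)
next
  case (Suc b)
  show ?case
  proof (cases "a \<le> b")
    case True
    then have "rev [Suc a..<Suc (Suc b)] = Suc b # rev [Suc a..<Suc b]" by simp
    then have "recoils (rev [Suc a..<Suc (Suc b)]) = {i. a < i \<and> i < b} \<union> {i. Suc i = Suc b \<and> i \<in> set (rev [Suc a..<Suc b])}"
      by (simp only: recoils_Cons Suc.IH)
    also have "\<dots> = {i. a < i \<and> i < Suc b}"
    proof (rule set_eqI)
      fix i show "i \<in> {i. a < i \<and> i < b} \<union> {i. Suc i = Suc b \<and> i \<in> set (rev [Suc a..<Suc b])} \<longleftrightarrow> i \<in> {i. a < i \<and> i < Suc b}"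
        by (simp only: set_rev set_upt mem_Collect_eq Un_iff atLeastLessThan_iff) linarith
    qed
    finally show ?thesis .
  next
    case False then show ?thesis by (auto simp: recoils_def)
  qed
qed

lemma dec_unique:
  "distinct xs \<Longrightarrow> set xs = {i. a < i \<and> i \<le> b} \<Longrightarrow> (\<forall>i. a < i \<and> i < b \<longrightarrow> i \<in> recoils xs)
   \<Longrightarrow> xs = rev [Suc a..<Suc b]"
proof (induction xs arbitrary: b)
  case Nil
  then have "\<not> a < b" by (auto simp: set_eq_iff dest: spec[of _ b])
  then show ?case by simp
next
  case (Cons y ys)
  have ab: "a < y" "y \<le> b" using Cons.prems(2) by auto
  have yb: "y = b"
  proof (rule ccontr)
    assume "y \<noteq> b"
    then have "y \<in> recoils (y # ys)" using Cons.prems(3) ab by auto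
    then have "y \<in> set ys" using recoils_sub_set[of ys] by (auto simp: recoils_Cons)
    then show False using Cons.prems(1) by simp
  qed
  then obtain b' where b': "b = Suc b'" using ab by (cases b) auto
  have nb: "b \<notin> set ys" using Cons.prems(1) yb by simp
  have "insert b (set ys) = {i. a < i \<and> i \<le> b}" using Cons.prems(2) yb by simp
  then have "set ys = {i. a < i \<and> i \<le> b} - {b}" using nb by blast
  also have "\<dots> = {i. a < i \<and> i \<le> b'}" using b' by auto
  finally have "set ys = {i. a < i \<and> i \<le> b'}" .
  moreover have "\<forall>i. a < i \<and> i < b' \<longrightarrow> i \<in> recoils ys"
    using Cons.prems(3) yb b' by (auto simp: recoils_Cons)
  ultimately have "ys = rev [Suc a..<Suc b']" using Cons by simp
  then show ?case using yb b' ab by simp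
qed

fun blk :: "nat list \<Rightarrow> nat \<Rightarrow> nat list" where
  "blk [] acc = []"
| "blk (k # K) acc = rev [Suc acc..<Suc (acc + k)] @ blk K (acc + k)"

lemma blk_set: "set (blk K acc) = {i. acc < i \<and> i \<le> acc + sum_list K}"
  by (induction K arbitrary: acc) auto

lemma blk_distinct: "distinct (blk K acc)"
  by (induction K arbitrary: acc) (auto simp: blk_set)

lemma blk_fct: "\<forall>x\<in>set K. 0 < x \<Longrightarrow> map length (fct (blk K acc)) = K"
proof (induction K arbitrary: acc)
  case Nil then show ?case by simp
next
  case (Cons k K)
  then have k: "0 < k" by simp
  then obtain m where m: "acc + k = Suc m" by (cases "acc + k") auto
  have r: "rev [Suc acc..<Suc (acc + k)] = (acc + k) # rev [Suc acc..<acc + k]"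
    using k m by simp
  have s1: "\<forall>x\<in>set (rev [Suc acc..<acc + k]). x < acc + k" by auto
  have s2: "\<forall>x\<in>set (take 1 (blk K (acc + k))). \<not> x < acc + k"
  proof
    fix x assume "x \<in> set (take 1 (blk K (acc + k)))"
    then have "x \<in> set (blk K (acc + k))" by (rule in_set_takeD)
    then show "\<not> x < acc + k" unfolding blk_set by simp
  qed
  have "fct (blk (k # K) acc) = ((acc + k) # rev [Suc acc..<acc + k]) # fct (blk K (acc + k))"
  proof -
    have t1: "takeWhile (\<lambda>x. x < acc + k) (rev [Suc acc..<acc + k] @ blk K (acc + k)) = rev [Suc acc..<acc + k]"
      using takeWhile_append2[of "rev [Suc acc..<acc + k]" "\<lambda>x. x < acc + k"] s1 tw_nil[OF s2] by simp
    have d1: "dropWhile (\<lambda>x. x < acc + k) (rev [Suc acc..<acc + k] @ blk K (acc + k)) = blk K (acc + k)"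
      using dropWhile_append2[of "rev [Suc acc..<acc + k]" "\<lambda>x. x < acc + k"] s1 tw_nil[OF s2] by simp
    show ?thesis by (simp only: blk.simps r fct.simps(2) append_Cons t1 d1)
  qed
  then show ?case using Cons k by simp
qed

lemma blk_recoils: "\<forall>x\<in>set K. 0 < x \<Longrightarrow>
  recoils (blk K acc) = {i. acc < i \<and> i < acc + sum_list K} - (\<lambda>x. acc + x) ` comp_des K"
proof (induction K arbitrary: acc)
  case Nil then show ?case by (simp add: recoils_def)
next
  case (Cons k K)
  have IH: "recoils (blk K (acc + k)) = {i. acc + k < i \<and> i < acc + k + sum_list K} - (\<lambda>x. acc + k + x) ` comp_des K"
    using Cons by simp
  have e: "{i. Suc i \<in> set (rev [Suc acc..<Suc (acc + k)]) \<and> i \<in> set (blk K (acc + k))} = {}"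
    by (auto simp: blk_set)
  have pos: "\<forall>y\<in>comp_des K. 0 < y" using comp_des_pos[of K] Cons.prems by auto
  have "recoils (blk (k # K) acc) = {i. acc < i \<and> i < acc + k} \<union>
      ({i. acc + k < i \<and> i < acc + k + sum_list K} - (\<lambda>x. acc + k + x) ` comp_des K)"
  proof -
    have "recoils (blk (k # K) acc) = recoils (rev [Suc acc..<Suc (acc + k)]) \<union> recoils (blk K (acc + k))
       \<union> {i. Suc i \<in> set (rev [Suc acc..<Suc (acc + k)]) \<and> i \<in> set (blk K (acc + k))}"
      by (simp only: blk.simps recoils_append)
    then show ?thesis using IH e by (simp only: recoils_rev_interval) simp
  qed
  also have "\<dots> = {i. acc < i \<and> i < acc + sum_list (k # K)} - (\<lambda>x. acc + x) ` comp_des (k # K)"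
  proof (cases "K = []")
    case True then show ?thesis by (auto simp: comp_des_Cons)
  next
    case False
    show ?thesis
    proof (rule set_eqI)
      fix i
      consider "i < acc + k" | "i = acc + k" | "acc + k < i" by linarith
      then show "i \<in> {i. acc < i \<and> i < acc + k} \<union>
      ({i. acc + k < i \<and> i < acc + k + sum_list K} - (\<lambda>x. acc + k + x) ` comp_des K) \<longleftrightarrow>
        i \<in> {i. acc < i \<and> i < acc + sum_list (k # K)} - (\<lambda>x. acc + x) ` comp_des (k # K)"
      proof cases
        case 1 then show ?thesis using False by (auto simp: comp_des_Cons)
      next
        case 2 then show ?thesis using False by (auto simp: comp_des_Cons)
      next
        case 3 then show ?thesis using False by (auto simp: comp_des_Cons image_image add.assoc)
      qed
    qed
  qed
  finally show ?case .
qed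



lemma blk_unique:
  "\<forall>x\<in>set K. 0 < x \<Longrightarrow> distinct xs \<Longrightarrow> set xs = {i. acc < i \<and> i \<le> acc + sum_list K}
   \<Longrightarrow> (\<forall>p\<in>comp_des K. set (take p xs) = {i. acc < i \<and> i \<le> acc + p})
   \<Longrightarrow> (\<forall>i. acc < i \<and> i < acc + sum_list K \<and> i \<notin> (\<lambda>x. acc + x) ` comp_des K \<longrightarrow> i \<in> recoils xs)
   \<Longrightarrow> xs = blk K acc"
proof (induction K arbitrary: acc xs)
  case Nil
  then have "set xs = {}" by auto
  then show ?case by simp
next
  case (Cons k K)
  have cc: "{i. acc < i \<and> i \<le> acc + (k + sum_list K)} = {acc<..acc + (k + sum_list K)}" by auto
  have lenxs: "length xs = k + sum_list K"
    using Cons.prems(2,3) distinct_card[of xs] cc by simp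
  define ys where "ys = take k xs"
  define zs where "zs = drop k xs"
  have xs: "xs = ys @ zs" by (simp add: ys_def zs_def)
  have dyz: "distinct ys" "distinct zs" "set ys \<inter> set zs = {}"
    using Cons.prems(2) xs by (metis distinct_append)+
  have sys: "set ys = {i. acc < i \<and> i \<le> acc + k}"
  proof (cases "K = []")
    case True then show ?thesis using Cons.prems(3) lenxs by (simp add: ys_def)
  next
    case False
    then have "k \<in> comp_des (k # K)" by (simp add: comp_des_Cons)
    then show ?thesis using Cons.prems(4) by (simp add: ys_def)
  qed
  have szs: "set zs = {i. acc + k < i \<and> i \<le> acc + k + sum_list K}"
  proof -
    have e: "set zs = set xs - set ys" using dyz xs by auto
    show ?thesis
    proof (rule set_eqI)
      fix i
      show "i \<in> set zs \<longleftrightarrow> i \<in> {i. acc + k < i \<and> i \<le> acc + k + sum_list K}"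
        unfolding e sys Cons.prems(3) by simp arith
    qed
  qed
  have "\<forall>i. acc < i \<and> i < acc + k \<longrightarrow> i \<in> recoils ys"
  proof (intro allI impI)
    fix i assume i: "acc < i \<and> i < acc + k"
    have "i \<notin> (\<lambda>x. acc + x) ` comp_des (k # K)"
      using i comp_des_ge[of _ k K] by force
    then have "i \<in> recoils xs" using Cons.prems(5) i by simp
    moreover have "i \<in> set ys" using sys i by simp
    ultimately show "i \<in> recoils ys"
      using xs dyz(3) recoils_sub_set[of zs] by (auto simp: recoils_append)
  qed
  then have ys': "ys = rev [Suc acc..<Suc (acc + k)]"
    using dec_unique[OF dyz(1) sys] by blast
  have "zs = blk K (acc + k)"
  proof (rule Cons.IH)
    show "\<forall>x\<in>set K. 0 < x" using Cons.prems by simp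
    show "distinct zs" by fact
    show "set zs = {i. acc + k < i \<and> i \<le> acc + k + sum_list K}" by fact
    show "\<forall>p\<in>comp_des K. set (take p zs) = {i. acc + k < i \<and> i \<le> acc + k + p}"
    proof
      fix p assume p: "p \<in> comp_des K"
      then have "K \<noteq> []" by auto
      then have "k + p \<in> comp_des (k # K)" using p by (simp add: comp_des_Cons)
      then have "set (take (k + p) xs) = {i. acc < i \<and> i \<le> acc + (k + p)}" using Cons.prems(4) by blast
      moreover have "take (k + p) xs = ys @ take p zs" by (simp add: ys_def zs_def take_add)
      ultimately have "set ys \<union> set (take p zs) = {i. acc < i \<and> i \<le> acc + (k + p)}" by simp
      moreover have "set (take p zs) \<inter> set ys = {}" using dyz(3) by (meson disjoint_iff in_set_takeD)
      ultimately have e: "set (take p zs) = {i. acc < i \<and> i \<le> acc + (k + p)} - set ys" by blast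
      show "set (take p zs) = {i. acc + k < i \<and> i \<le> acc + k + p}"
      proof (rule set_eqI)
        fix i
        show "i \<in> set (take p zs) \<longleftrightarrow> i \<in> {i. acc + k < i \<and> i \<le> acc + k + p}"
          unfolding e sys by simp arith
      qed
    qed
    show "\<forall>i. acc + k < i \<and> i < acc + k + sum_list K \<and> i \<notin> (\<lambda>x. acc + k + x) ` comp_des K \<longrightarrow> i \<in> recoils zs"
    proof (intro allI impI)
      fix i assume i: "acc + k < i \<and> i < acc + k + sum_list K \<and> i \<notin> (\<lambda>x. acc + k + x) ` comp_des K"
      have "i \<notin> (\<lambda>x. acc + x) ` comp_des (k # K)"
        using i by (auto simp: comp_des_Cons image_image add.assoc split: if_splits)
      then have "i \<in> recoils xs" using Cons.prems(5) i by simp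
      moreover have "i \<notin> set ys" "Suc i \<notin> set ys" using sys i by simp_all
      ultimately show "i \<in> recoils zs"
        using xs recoils_sub_set[of ys] by (auto simp: recoils_append)
    qed
  qed
  then show ?case using xs ys' by simp
qed

locale perm_ctx =
  fixes s :: "nat list" and n :: nat
  assumes ds: "distinct s" and ss: "set s = {1..n}" and n1: "1 \<le> n"
begin

definition "L = lrpos s - {0}"
definition "M = (\<lambda>q. s ! q) ` lrpos s - {n}"
definition "g m = (LEAST i. m < s ! i)"

lemma len: "length s = n"
  using distinct_card[OF ds] ss by simp

lemma nth_in: "i < n \<Longrightarrow> s ! i \<in> {1..n}"
  using ss len nth_mem by blast

lemma pos_n: "\<exists>p<n. s ! p = n"
proof -
  have "n \<in> set s" using ss n1 by simp
  then show ?thesis using len by (auto simp: in_set_conv_nth)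
qed

lemma L_sub: "L \<subseteq> {1..<n}"
  using len by (auto simp: L_def lrpos_def)

lemma M_sub: "M \<subseteq> {1..<n}"
proof
  fix m assume "m \<in> M"
  then obtain q where q: "q \<in> lrpos s" "m = s ! q" "m \<noteq> n" by (auto simp: M_def)
  then have "q < n" using len by (simp add: lrpos_def)
  then show "m \<in> {1..<n}" using nth_in[of q] q by auto
qed

lemma finL: "finite L" and finM: "finite M"
  using L_sub M_sub finite_subset by blast+

lemma card_LM: "card M = card L"
proof -
  obtain p where p: "p < n" "s ! p = n" using pos_n by blast
  have "p \<in> lrpos s"
    unfolding lrpos_def
  proof (intro CollectI conjI allI impI)
    show "p < length s" using p len by simp
    fix i assume "i < p"
    then have "s ! i \<noteq> s ! p" using ds p len nth_eq_iff_index_eq[OF ds, of i p] by auto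
    moreover have "s ! i \<le> n" using nth_in[of i] \<open>i < p\<close> p by auto
    ultimately show "s ! i < s ! p" using p by simp
  qed
  then have nin: "n \<in> (\<lambda>q. s ! q) ` lrpos s" using p by force
  have z: "0 \<in> lrpos s" using n1 len by (simp add: lrpos_def)
  have fin: "finite (lrpos s)" by (simp add: lrpos_def)
  have inj: "inj_on (\<lambda>q. s ! q) (lrpos s)"
    using ds by (auto simp: inj_on_def lrpos_def nth_eq_iff_index_eq)
  have "card M = card ((\<lambda>q. s ! q) ` lrpos s) - 1"
    unfolding M_def using nin fin by (simp add: card_Diff_singleton)
  also have "\<dots> = card (lrpos s) - 1" using card_image[OF inj] by simp
  also have "\<dots> = card L" unfolding L_def using z fin by (simp add: card_Diff_singleton)
  finally show ?thesis .
qed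

lemma M_elem: "m \<in> M \<Longrightarrow> \<exists>q. q \<in> lrpos s \<and> s ! q = m \<and> m < n"
proof -
  assume m: "m \<in> M"
  then have "m < n" using M_sub by auto
  moreover obtain q where "q \<in> lrpos s" "s ! q = m" using m by (auto simp: M_def)
  ultimately show ?thesis by blast
qed

lemma rec_sub: "recoils s \<subseteq> {1..<n} - M"
proof
  fix i assume i: "i \<in> recoils s"
  then obtain j k where jk: "j < k" "k < length s" "s ! j = i + 1" "s ! k = i"
    by (auto simp: recoils_def)
  have "i + 1 \<in> {1..n}" "i \<in> {1..n}" using jk nth_in len by (metis less_trans)+
  then have "i \<in> {1..<n}" by auto
  moreover have "i \<notin> M"
  proof
    assume "i \<in> M"
    then obtain q where q: "q \<in> lrpos s" "s ! q = i" using M_elem by blast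
    then have "q = k" using jk nth_eq_iff_index_eq[OF ds, of q k] by (simp add: lrpos_def)
    have "\<forall>i'<q. s ! i' < s ! q" using q(1) by (simp add: lrpos_def)
    then have "s ! j < s ! k" using jk \<open>q = k\<close> by blast
    then show False using jk by simp
  qed
  ultimately show "i \<in> {1..<n} - M" by blast
qed

lemma g_props:
  assumes m: "m \<in> M"
  shows "g m \<in> L" "g m \<le> m" "\<forall>i<g m. s ! i \<le> m"
proof -
  obtain q where q: "q \<in> lrpos s" "s ! q = m" "m < n" using M_elem[OF m] by blast
  obtain p where p: "p < n" "s ! p = n" using pos_n by blast
  have ex: "m < s ! p" using p q by simp
  have gm: "m < s ! g m" unfolding g_def by (rule LeastI[of _ p]) (rule ex)
  have gp: "g m \<le> p" unfolding g_def by (rule Least_le) (rule ex)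
  show lt: "\<forall>i<g m. s ! i \<le> m"
    using not_less_Least[of _ "\<lambda>i. m < s ! i"] unfolding g_def by (meson not_less)
  have "g m \<in> lrpos s" unfolding lrpos_def using gp p len lt gm
    by (auto intro: le_less_trans)
  moreover have "g m \<noteq> 0"
  proof
    assume "g m = 0"
    then have "m < s ! 0" using gm by simp
    moreover have "s ! 0 \<le> m" using lrpos_ge_hd[OF q(1)] q by simp
    ultimately show False by simp
  qed
  ultimately show "g m \<in> L" by (simp add: L_def)
  have gn: "g m < n" using gp p by simp
  have "set (take (g m) s) \<subseteq> {1..m}"
  proof
    fix x assume "x \<in> set (take (g m) s)"
    then obtain i where "i < g m" "x = s ! i" using gn len by (auto simp: in_set_conv_nth)
    then show "x \<in> {1..m}" using lt nth_in[of i] gn by auto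
  qed
  then have "card (set (take (g m) s)) \<le> m" using card_mono[of "{1..m}"] by fastforce
  moreover have "card (set (take (g m) s)) = g m"
    using distinct_card[of "take (g m) s"] ds gn len by simp
  ultimately show "g m \<le> m" by simp
qed

lemma g_mono: "m1 \<in> M \<Longrightarrow> m2 \<in> M \<Longrightarrow> m1 < m2 \<Longrightarrow> g m1 < g m2"
proof -
  assume m: "m1 \<in> M" "m2 \<in> M" "m1 < m2"
  obtain q where q: "q \<in> lrpos s" "s ! q = m2" "m2 < n" using M_elem[OF m(2)] by blast
  have "g m1 \<le> q" unfolding g_def by (rule Least_le) (use q m in simp)
  moreover have "q < g m2"
  proof (rule ccontr)
    assume "\<not> q < g m2"
    then have le: "g m2 \<le> q" by simp
    have "m2 < s ! g m2"
    proof -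
      obtain p where p: "p < n" "s ! p = n" using pos_n by blast
      show ?thesis unfolding g_def by (rule LeastI[of _ p]) (use p q in simp)
    qed
    moreover have "s ! g m2 \<le> s ! q"
    proof (cases "g m2 = q")
      case True then show ?thesis by simp
    next
      case False
      then have "g m2 < q" using le by simp
      moreover have "\<forall>i<q. s ! i < s ! q" using q(1) by (simp add: lrpos_def)
      ultimately show ?thesis by (simp add: less_imp_le)
    qed
    ultimately show False using q by simp
  qed
  ultimately show "g m1 < g m2" by simp
qed

lemma g_inj: "inj_on g M"
  by (rule inj_onI) (metis g_mono linorder_neqE_nat less_irrefl)

lemma key: "x \<in> M \<Longrightarrow> x \<notin> L \<Longrightarrow> \<forall>y<x. y \<in> M \<longleftrightarrow> y \<in> L \<Longrightarrow> False"
proof -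
  assume x: "x \<in> M" "x \<notin> L" "\<forall>y<x. y \<in> M \<longleftrightarrow> y \<in> L"
  define A where "A = {m \<in> M. m \<le> x}"
  define B where "B = {q \<in> L. q \<le> x}"
  have finB: "finite B" using finL by (simp add: B_def)
  have "g ` A \<subseteq> B" using g_props by (fastforce simp: A_def B_def)
  moreover have "inj_on g A" using g_inj by (rule inj_on_subset) (auto simp: A_def)
  ultimately have "card A \<le> card B" using finB by (metis card_inj_on_le)
  moreover have "A = insert x B"
  proof (rule set_eqI)
    fix y show "y \<in> A \<longleftrightarrow> y \<in> insert x B"
    proof (cases "y < x")
      case True
      then have "y \<in> M \<longleftrightarrow> y \<in> L" using x(3) by blast
      then show ?thesis using True by (auto simp: A_def B_def)
    next
      case False
      then show ?thesis using x(1,2) by (auto simp: A_def B_def)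
    qed
  qed
  moreover have "x \<notin> B" using x by (simp add: B_def)
  ultimately show False using finB by simp
qed

lemma diag_prefix:
  assumes MeqL: "M = L"
  shows "m \<in> L \<Longrightarrow> set (take m s) = {i. 0 < i \<and> i \<le> m}"
proof -
  have gid: "m \<in> L \<Longrightarrow> g m = m" for m
  proof (induction m rule: less_induct)
    case (less m)
    have mM: "m \<in> M" using less MeqL by simp
    show ?case
    proof (rule ccontr)
      assume ne: "g m \<noteq> m"
      then have lt: "g m < m" using g_props(2)[OF mM] by simp
      have gL: "g m \<in> L" using g_props(1)[OF mM] .
      then have "g (g m) = g m" using less.IH lt by blast
      moreover have "g m \<in> M" using gL MeqL by simp
      ultimately have "g m = m" using g_inj mM by (meson inj_onD)
      then show False using ne by simp
    qed
  qed
  assume m: "m \<in> L"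
  then have mn: "m < n" using L_sub by auto
  have lt: "\<forall>i<m. s ! i \<le> m" using g_props(3)[of m] gid[OF m] m MeqL by simp
  have sub: "set (take m s) \<subseteq> {i. 0 < i \<and> i \<le> m}"
  proof
    fix x assume "x \<in> set (take m s)"
    then obtain i where "i < m" "x = s ! i" using mn len by (auto simp: in_set_conv_nth)
    then show "x \<in> {i. 0 < i \<and> i \<le> m}" using lt nth_in[of i] mn by auto
  qed
  moreover have "card (set (take m s)) = m"
    using distinct_card[of "take m s"] ds mn len by simp
  moreover have "{i. 0 < i \<and> i \<le> m} = {1..m}" by auto
  ultimately show ?thesis by (metis card_atLeastAtMost card_subset_eq diff_Suc_1 finite_atLeastAtMost)
qed

end



lemma analysis:
  assumes n1: "1 \<le> n" and J: "is_comp n J" and sp: "s \<in> perms n"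
    and sc: "SC s = comp_bar_tilde n J"
  shows "RC n s = J \<or> comp_less (RC n s) J"
    and "RC n s = J \<Longrightarrow> s = blk (comp_bar_tilde n J) 0"
proof -
  interpret perm_ctx s n using sp n1 by unfold_locales (auto simp: perms_def)
  define C where "C = {1..<n}"
  define K where "K = comp_bar_tilde n J"
  have DJ: "comp_des J \<subseteq> C" using comp_des_sub[OF J] by (simp add: C_def)
  have Kc: "is_comp n K" "comp_des K = C - comp_des J"
    using comp_of_des[OF n1, of "C - comp_des J"] by (auto simp: K_def comp_bar_tilde_def C_def)
  have "comp_des (SC s) = L" using fct_des[OF ds] by (simp add: SC_def saillance_fct[OF ds] L_def)
  then have LS: "L = C - comp_des J" using sc Kc by (simp add: K_def)
  then have DJL: "comp_des J = C - L" using DJ by auto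
  define R where "R = recoils s"
  have RC: "R \<subseteq> C - M" using rec_sub by (simp add: R_def C_def)
  define I where "I = RC n s"
  have Ic: "is_comp n I" "comp_des I = R"
    using comp_of_des[OF n1, of R] RC by (auto simp: I_def RC_def R_def C_def)
  have finC: "finite C" by (simp add: C_def)
  have cardC: "card C = n - 1" by (simp add: C_def)
  have MC: "M \<subseteq> C" and LC: "L \<subseteq> C" using M_sub L_sub by (auto simp: C_def)
  have posJ: "\<forall>x\<in>set J. 0 < x" and posI: "\<forall>x\<in>set I. 0 < x"
    using J Ic by (auto simp: is_comp_def)
  have "J \<noteq> []" using J n1 by (auto simp: is_comp_def)
  then have lenJ: "length J = card (comp_des J) + 1" using card_comp_des[OF posJ] by simp
  have "I \<noteq> []" using Ic n1 by (auto simp: is_comp_def)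
  then have lenI: "length I = card R + 1" using card_comp_des[OF posI] Ic by simp
  have cR: "card R \<le> card (C - M)" using RC finC by (simp add: card_mono)
  have cCM: "card (C - M) = card (C - L)"
    using card_Diff_subset[OF _ MC] card_Diff_subset[OF _ LC] finite_subset[OF MC finC]
      finite_subset[OF LC finC] card_LM by simp
  have main: "(I = J \<or> comp_less I J) \<and> (I = J \<longrightarrow> s = blk K 0)"
  proof (cases "card R < card (C - M)")
    case True
    then have "length I < length J" using lenI lenJ DJL cCM by simp
    then show ?thesis by (auto simp: comp_less_def)
  next
    case False
    then have RCM: "R = C - M" using cR RC finC by (metis card_subset_eq finite_Diff le_neq_implies_less)
    have "length I = length J" using lenI lenJ DJL cCM RCM by simp
    show ?thesis
    proof (cases "I = J")
      case True
      then have "C - M = C - L" using Ic RCM DJL by simp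
      then have MeqL: "M = L" using MC LC by blast
      have posK: "\<forall>x\<in>set K. 0 < x" and sK: "sum_list K = n" using Kc by (auto simp: is_comp_def)
      have "s = blk K 0"
      proof (rule blk_unique[OF posK ds])
        have "{i. 0 < i \<and> i \<le> 0 + sum_list K} = {1..n}" using sK by auto
        then show "set s = {i. 0 < i \<and> i \<le> 0 + sum_list K}" using ss by simp
        show "\<forall>p\<in>comp_des K. set (take p s) = {i. 0 < i \<and> i \<le> 0 + p}"
          using diag_prefix[OF MeqL] Kc LS by simp
        show "\<forall>i. 0 < i \<and> i < 0 + sum_list K \<and> i \<notin> (\<lambda>x. 0 + x) ` comp_des K \<longrightarrow> i \<in> recoils s"
          using Kc LS sK RCM MeqL by (auto simp: R_def C_def)
      qed
      then show ?thesis using True by simp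
    next
      case False
      then have "R \<noteq> comp_des J" using Ic J comp_unique by blast
      then have MLne: "M \<noteq> L" using RCM DJL by auto
      define D where "D = (M - L) \<union> (L - M)"
      have finD: "finite D" using finM finL by (simp add: D_def)
      have Dne: "D \<noteq> {}" using MLne by (auto simp: D_def)
      define x where "x = Min D"
      have xD: "x \<in> D" using Min_in[OF finD Dne] by (simp add: x_def)
      have below: "\<forall>y<x. y \<in> M \<longleftrightarrow> y \<in> L"
      proof (intro allI impI)
        fix y assume "y < x"
        then have "y \<notin> D" using Min_le[OF finD] x_def by fastforce
        then show "y \<in> M \<longleftrightarrow> y \<in> L" by (auto simp: D_def)
      qed
      have "x \<notin> M - L" using key below by blast
      then have xLM: "x \<in> L" "x \<notin> M" using xD by (auto simp: D_def)
      have "(I, J) \<in> lexord {(a, b). a < b}"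
      proof (rule lex_from_des[OF \<open>length I = length J\<close> posI posJ])
        show "x \<in> comp_des I" using Ic RCM xLM LC by auto
        show "x \<notin> comp_des J" using DJL xLM by auto
        show "\<forall>y<x. y \<in> comp_des I \<longleftrightarrow> y \<in> comp_des J" using Ic RCM DJL below by auto
      qed
      then show ?thesis using \<open>length I = length J\<close> False by (simp add: comp_less_def)
    qed
  qed
  then show "RC n s = J \<or> comp_less (RC n s) J" by (auto simp: I_def)
  show "RC n s = J \<Longrightarrow> s = blk (comp_bar_tilde n J) 0"
    using main by (simp add: I_def K_def)
qed

lemma existence:
  assumes n1: "1 \<le> n" and J: "is_comp n J"
  shows "blk (comp_bar_tilde n J) 0 \<in> perms n" "SC (blk (comp_bar_tilde n J) 0) = comp_bar_tilde n J"
    "RC n (blk (comp_bar_tilde n J) 0) = J"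
proof -
  define C where "C = {1..<n}"
  let ?K = "comp_bar_tilde n J"
  have DJ: "comp_des J \<subseteq> C" using comp_des_sub[OF J] by (simp add: C_def)
  have Kc: "is_comp n ?K" "comp_des ?K = C - comp_des J"
    using comp_of_des[OF n1, of "C - comp_des J"] by (auto simp: comp_bar_tilde_def C_def)
  have posK: "\<forall>x\<in>set ?K. 0 < x" and sK: "sum_list ?K = n" using Kc by (auto simp: is_comp_def)
  have d: "distinct (blk ?K 0)" by (rule blk_distinct)
  have st: "set (blk ?K 0) = {i. 0 < i \<and> i \<le> n}" using blk_set[of ?K 0] sK by simp
  have "{i. 0 < i \<and> i \<le> n} = {1..n}" by auto
  then show "blk ?K 0 \<in> perms n" using st d by (simp add: perms_def)
  then show "SC (blk ?K 0) = ?K"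
    using saillance_fct[OF d] blk_fct[OF posK] by (simp add: SC_def)
  have i1: "(\<lambda>x. 0 + x) ` comp_des ?K = comp_des ?K" by simp
  have i2: "{i. 0 < i \<and> i < 0 + sum_list ?K} = C" using sK by (auto simp: C_def)
  have "recoils (blk ?K 0) = C - comp_des ?K" using blk_recoils[OF posK, of 0] unfolding i1 i2 .
  then have r: "recoils (blk ?K 0) = comp_des J" using Kc DJ by auto
  have "is_comp n (comp_of_des n (comp_des J)) \<and> comp_des (comp_of_des n (comp_des J)) = comp_des J"
    using comp_of_des[OF n1] DJ by (simp add: C_def)
  then show "RC n (blk ?K 0) = J" using r comp_unique J by (simp add: RC_def) blast
qed

theorem mainTheorem3:
  fixes n :: nat and J :: "nat list"
  assumes "1 \<le> n" and "is_comp n J"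
  shows "U_coeff n J J = 1 \<and>
    (\<forall>I. is_comp n I \<and> I \<noteq> J \<and> \<not> comp_less I J \<longrightarrow> U_coeff n J I = 0)"
proof
  have e: "{s \<in> perms n. SC s = comp_bar_tilde n J \<and> RC n s = J} = {blk (comp_bar_tilde n J) 0}"
    using analysis(2)[OF assms] existence[OF assms] by blast
  show "U_coeff n J J = 1" unfolding U_coeff_def e by simp
next
  show "\<forall>I. is_comp n I \<and> I \<noteq> J \<and> \<not> comp_less I J \<longrightarrow> U_coeff n J I = 0"
  proof (intro allI impI)
    fix I assume I: "is_comp n I \<and> I \<noteq> J \<and> \<not> comp_less I J"
    have e: "{s \<in> perms n. SC s = comp_bar_tilde n J \<and> RC n s = I} = {}"
      using analysis(1)[OF assms] I by blast
    show "U_coeff n J I = 0" unfolding U_coeff_def e by simp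
  qed
qed


end
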